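(* Let $0\leq \alpha < 1$ and let $G$ be a connected graph with $n$ vertices and $m$ edges. Let $1\leq k\leq n$ and let $U=\{u_1,\ldots,u_{k-1}\}\subseteq V(G)$ be any set of $k-1$ vertices (empty if $k=1$). Then $$S_{k}(A_{\alpha}(G)) \geq \left(\alpha-\frac{1}{n-k+1}\right)\sum_{u\in U}d_u+\frac{2m-(1-\alpha)|\partial(U, V(G)\setminus U)|}{n-k+1}.$$
   Context: All graphs are simple and undirected. $d_u$ is the degree of vertex $u$. $A_{\alpha}(G)=\alpha D(G)+(1-\alpha)A(G)$, where $A(G)$ is the adjacency matrix and $D(G)$ the diagonal degree matrix. For a real symmetric matrix $M$ with eigenvalues $\lambda_1(M)\geq\cdots\geq\lambda_n(M)$, $S_k(M)=\sum_{i=1}^k\lambda_i(M)$. For $U,W\subseteq V(G)$, $\partial(U,W)$ is the set of edges joining a vertex of $U$ with a vertex of $W$. *)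

theory Defs
  imports "Jordan_Normal_Form.Char_Poly" "HOL-Library.Multiset"
begin

definition simple_graph :: "nat \<Rightarrow> (nat \<Rightarrow> nat \<Rightarrow> bool) \<Rightarrow> bool" where
  "simple_graph n E \<longleftrightarrow> (\<forall>u v. E u v \<longrightarrow> E v u) \<and> (\<forall>u. \<not> E u u)
      \<and> (\<forall>u v. E u v \<longrightarrow> u < n \<and> v < n)"

definition connected_graph :: "nat \<Rightarrow> (nat \<Rightarrow> nat \<Rightarrow> bool) \<Rightarrow> bool" where
  "connected_graph n E \<longleftrightarrow> (\<forall>u<n. \<forall>v<n. E\<^sup>*\<^sup>* u v)"

definition edges :: "nat \<Rightarrow> (nat \<Rightarrow> nat \<Rightarrow> bool) \<Rightarrow> nat set set" where
  "edges n E = {{u, v} | u v. u < n \<and> v < n \<and> E u v}"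

definition degree :: "nat \<Rightarrow> (nat \<Rightarrow> nat \<Rightarrow> bool) \<Rightarrow> nat \<Rightarrow> nat" where
  "degree n E u = card {v. v < n \<and> E u v}"

definition boundary :: "nat \<Rightarrow> (nat \<Rightarrow> nat \<Rightarrow> bool) \<Rightarrow> nat set \<Rightarrow> nat set \<Rightarrow> nat set set" where
  "boundary n E U W = {{u, w} | u w. u \<in> U \<and> w \<in> W \<and> u < n \<and> w < n \<and> E u w}"

definition adj_mat :: "nat \<Rightarrow> (nat \<Rightarrow> nat \<Rightarrow> bool) \<Rightarrow> real mat" where
  "adj_mat n E = mat n n (\<lambda>(i, j). if E i j then 1 else 0)"

definition deg_mat :: "nat \<Rightarrow> (nat \<Rightarrow> nat \<Rightarrow> bool) \<Rightarrow> real mat" where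
  "deg_mat n E = mat n n (\<lambda>(i, j). if i = j then real (degree n E i) else 0)"

definition A_alpha :: "real \<Rightarrow> nat \<Rightarrow> (nat \<Rightarrow> nat \<Rightarrow> bool) \<Rightarrow> real mat" where
  "A_alpha \<alpha> n E = \<alpha> \<cdot>\<^sub>m deg_mat n E + (1 - \<alpha>) \<cdot>\<^sub>m adj_mat n E"

text \<open>Eigenvalues with multiplicity (roots of the characteristic polynomial),
listed in nonincreasing order. For real symmetric matrices all roots are real.\<close>
definition eigenvalues_desc :: "real mat \<Rightarrow> real list" where
  "eigenvalues_desc M = rev (sorted_list_of_multiset (proots (char_poly M)))"

definition S_k :: "nat \<Rightarrow> real mat \<Rightarrow> real" where
  "S_k k M = sum_list (take k (eigenvalues_desc M))"

end

theory Submission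
  imports Defs "HOL-Computational_Algebra.Fundamental_Theorem_Algebra"
begin

lemma real_eig:
  fixes A :: "real mat"
  assumes A: "A \<in> carrier_mat n n" and sym: "\<And>i j. i < n \<Longrightarrow> j < n \<Longrightarrow> A $$ (i,j) = A $$ (j,i)"
    and n: "n > 0"
  shows "\<exists>e v. v \<in> carrier_vec n \<and> v \<noteq> 0\<^sub>v n \<and> A *\<^sub>v v = e \<cdot>\<^sub>v v"
proof -
  define Ac where "Ac = map_mat complex_of_real A"
  have Ac: "Ac \<in> carrier_mat n n" using A unfolding Ac_def by auto
  have "Polynomial.degree (char_poly Ac) = n" using degree_monic_char_poly[OF Ac] by auto
  then have "\<not> constant (poly (char_poly Ac))" using n by (simp add: constant_degree)
  then obtain z where "poly (char_poly Ac) z = 0" using fundamental_theorem_of_algebra by blast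
  then have "eigenvalue Ac z" using eigenvalue_root_char_poly[OF Ac] by simp
  then obtain w where w: "eigenvector Ac w z" unfolding eigenvalue_def by blast
  have wc: "w \<in> carrier_vec n" and w0: "w \<noteq> 0\<^sub>v n" and ew: "Ac *\<^sub>v w = z \<cdot>\<^sub>v w"
    using w Ac unfolding eigenvector_def by auto
  define a where "a = (\<lambda>i. Re (w $ i))"
  define b where "b = (\<lambda>i. Im (w $ i))"
  define x where "x = Re z"
  define y where "y = Im z"
  have eqc: "(\<Sum>j<n. complex_of_real (A $$ (i,j)) * w $ j) = z * w $ i" if i: "i < n" for i
  proof -
    have "(Ac *\<^sub>v w) $ i = (z \<cdot>\<^sub>v w) $ i" using ew by simp
    then show ?thesis using i Ac wc A unfolding Ac_def
      by (simp add: mult_mat_vec_def scalar_prod_def row_def lessThan_atLeast0 mult.commute)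
  qed
  have eqa: "(\<Sum>j<n. A $$ (i,j) * a j) = x * a i - y * b i" if i: "i < n" for i
  proof -
    have "Re (\<Sum>j<n. complex_of_real (A $$ (i,j)) * w $ j) = Re (z * w $ i)" using eqc[OF i] by simp
    then show ?thesis unfolding a_def b_def x_def y_def by (simp add: Re_sum)
  qed
  have eqb: "(\<Sum>j<n. A $$ (i,j) * b j) = x * b i + y * a i" if i: "i < n" for i
  proof -
    have "Im (\<Sum>j<n. complex_of_real (A $$ (i,j)) * w $ j) = Im (z * w $ i)" using eqc[OF i] by simp
    then show ?thesis unfolding a_def b_def x_def y_def by (simp add: Im_sum algebra_simps)
  qed
  have "(\<Sum>i<n. b i * (\<Sum>j<n. A $$ (i,j) * a j)) = (\<Sum>i<n. \<Sum>j<n. b i * A $$ (i,j) * a j)"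
    by (simp add: sum_distrib_left mult.assoc)
  also have "\<dots> = (\<Sum>j<n. \<Sum>i<n. b i * A $$ (i,j) * a j)" by (rule sum.swap)
  also have "\<dots> = (\<Sum>j<n. a j * (\<Sum>i<n. A $$ (j,i) * b i))"
    by (auto simp: sum_distrib_left sym intro!: sum.cong)
  finally have "(\<Sum>i<n. b i * (x * a i - y * b i)) = (\<Sum>j<n. a j * (x * b j + y * a j))"
    using eqa eqb by simp
  then have "y * (\<Sum>i<n. a i ^ 2 + b i ^ 2) = 0"
    by (simp add: sum_subtractf sum.distrib sum_distrib_left algebra_simps power2_eq_square)
  moreover have "(\<Sum>i<n. a i ^ 2 + b i ^ 2) > 0"
  proof -
    obtain i where i: "i < n" "w $ i \<noteq> 0" using w0 wc by (metis carrier_vecD eq_vecI index_zero_vec(1,2))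
    then have "a i ^ 2 + b i ^ 2 > 0" unfolding a_def b_def
      by (metis complex.expand sum_power2_gt_zero_iff zero_complex.sel(1,2))
    then show ?thesis
      by (intro sum_pos2[of _ i]) (use i in auto)
  qed
  ultimately have y0: "y = 0" by simp
  show ?thesis
  proof (cases "\<exists>i<n. a i \<noteq> 0")
    case True
    then obtain i where i: "i<n" "a i \<noteq> 0" by blast
    then have "vec n a \<noteq> 0\<^sub>v n" by (metis index_vec index_zero_vec(1))
    then show ?thesis using eqa y0 A
      by (intro exI[of _ x] exI[of _ "vec n a"])
         (auto simp: mult_mat_vec_def scalar_prod_def row_def lessThan_atLeast0 mult.commute
               intro!: eq_vecI)
  next
    case False
    then obtain i where i: "i < n" "w $ i \<noteq> 0" using w0 wc by (metis carrier_vecD eq_vecI index_zero_vec(1,2))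
    then have "b i \<noteq> 0" using False unfolding a_def b_def using complex.expand by force
    then have "vec n b \<noteq> 0\<^sub>v n" using i by (metis index_vec index_zero_vec(1))
    then show ?thesis using eqb y0 A i
      by (intro exI[of _ x] exI[of _ "vec n b"])
         (auto simp: mult_mat_vec_def scalar_prod_def row_def lessThan_atLeast0 mult.commute
               intro!: eq_vecI)
  qed
qed

lemma mat_mult_entry:
  assumes "A \<in> carrier_mat n k" "B \<in> carrier_mat k m" "i < n" "j < m"
  shows "(A * B) $$ (i,j) = (\<Sum>l<k. A $$ (i,l) * B $$ (l,j))"
  using assms by (simp add: scalar_prod_def lessThan_atLeast0)

lemma sum_delta_l: "i < (n::nat) \<Longrightarrow> (\<Sum>k<n. (if i = k then 1 else 0) * f k) = (f i :: real)"
proof -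
  assume "i < n"
  have "(\<Sum>k<n. (if i = k then 1 else 0) * f k) = (\<Sum>k<n. if i = k then f k else 0)"
    by (rule sum.cong) auto
  then show ?thesis using \<open>i < n\<close> by (simp add: sum.delta')
qed
lemma sum_delta_r: "i < (n::nat) \<Longrightarrow> (\<Sum>k<n. (if k = i then 1 else 0) * f k) = (f i :: real)"
proof -
  assume "i < n"
  have "(\<Sum>k<n. (if k = i then 1 else 0) * f k) = (\<Sum>k<n. if i = k then f k else 0)"
    by (rule sum.cong) auto
  then show ?thesis using \<open>i < n\<close> by (simp add: sum.delta')
qed

lemma householder:
  fixes v :: "nat \<Rightarrow> real"
  assumes n: "n > 0" and unit: "(\<Sum>i<n. v i ^ 2) = 1"
  defines "u \<equiv> (\<lambda>i. v i - (if i = 0 then 1 else 0))"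
  defines "H \<equiv> mat n n (\<lambda>(i,j). (if i = j then 1 else 0) - 2 / (\<Sum>k<n. u k ^ 2) * u i * u j)"
  shows "H \<in> carrier_mat n n" "transpose_mat H = H" "H * H = 1\<^sub>m n"
    "\<And>i. i < n \<Longrightarrow> H $$ (i,0) = v i"
proof -
  define c where "c = (\<Sum>k<n. u k ^ 2)"
  define t where "t = 2 / c"
  have tc: "t * t * c = 2 * t" unfolding t_def by (cases "c = 0") (auto simp: power2_eq_square)
  show Hc: "H \<in> carrier_mat n n" unfolding H_def by simp
  show "transpose_mat H = H" unfolding H_def by (rule eq_matI) auto
  show "H * H = 1\<^sub>m n"
  proof (rule eq_matI)
    fix i j assume i: "i < dim_row (1\<^sub>m n :: real mat)" and j: "j < dim_col (1\<^sub>m n :: real mat)"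
    then have i: "i < n" and j: "j < n" by auto
    have "(H * H) $$ (i,j) = (\<Sum>k<n. ((if i = k then 1 else 0) - t * u i * u k) * ((if k = j then 1 else 0) - t * u k * u j))"
      using i j by (subst mat_mult_entry[OF Hc Hc]) (simp_all add: H_def t_def c_def)
    also have "\<dots> = (\<Sum>k<n. (if i = k then 1 else 0) * (if k = j then 1 else 0))
       - (\<Sum>k<n. (if i = k then 1 else 0) * (t * u k * u j)) - (\<Sum>k<n. (if k = j then 1 else 0) * (t * u i * u k))
       + t * t * u i * u j * (\<Sum>k<n. u k ^ 2)"
      by (simp add: algebra_simps sum_subtractf sum.distrib sum_distrib_left power2_eq_square)
    also have "\<dots> = (if i = j then 1 else 0) - t * u i * u j - t * u i * u j + t * t * c * u i * u j"
      using i j by (simp add: c_def sum_delta_l sum_delta_r)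
    also have "\<dots> = (1\<^sub>m n) $$ (i,j)" using i j tc by (simp; blast)
    finally show "(H * H) $$ (i,j) = (1\<^sub>m n) $$ (i,j)" .
  qed (auto simp: H_def)
  fix i assume i: "i < n"
  have c2: "c = 2 - 2 * v 0"
  proof -
    have "c = (\<Sum>k<n. v k ^ 2) - 2 * (\<Sum>k<n. v k * (if k = 0 then 1 else 0)) + (\<Sum>k<n. (if k = 0 then 1 else 0))"
    proof -
      have pw: "u k ^ 2 = v k ^ 2 - 2 * (v k * (if k = 0 then 1 else 0)) + (if k = 0 then 1 else 0)" for k
        unfolding u_def by (cases "k = 0") (simp_all add: power2_eq_square algebra_simps)
      show ?thesis
      unfolding c_def pw by (simp add: sum_subtractf sum.distrib sum_distrib_left)
    qed
    also have "\<dots> = 2 - 2 * v 0"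
    proof -
      have "(\<Sum>k<n. v k * (if k = 0 then 1 else 0)) = v 0"
        using sum_delta_r[of 0 n "\<lambda>k. v k"] n by (simp add: mult.commute)
      moreover have "(\<Sum>k<n. (if k = 0 then 1 else 0::real)) = 1" using n by simp
      ultimately show ?thesis using unit by simp
    qed
    finally show ?thesis .
  qed
  have Hi0: "H $$ (i,0) = (if i = 0 then 1 else 0) - t * u i * u 0" using i n
    unfolding H_def t_def c_def by simp
  show "H $$ (i,0) = v i"
  proof (cases "c = 0")
    case True
    have "\<forall>k\<in>{..<n}. u k ^ 2 = 0"
      using True sum_nonneg_eq_0_iff[of "{..<n}" "\<lambda>k. u k ^ 2"] unfolding c_def by simp
    then have "u i = 0" using i by auto
    moreover have "t = 0" using True unfolding t_def by simp
    ultimately show ?thesis using Hi0 unfolding u_def by (simp split: if_splits)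
  next
    case False
    have "t * u 0 = -1" using False c2 unfolding t_def u_def by (simp add: field_simps)
    then have "t * u i * u 0 = - u i" by (metis mult.assoc mult.commute mult_minus1_right)
    then show ?thesis using Hi0 unfolding u_def by simp
  qed
qed

definition dmat :: "real list \<Rightarrow> real mat" where
  "dmat es = mat (length es) (length es) (\<lambda>(i,j). if i = j then es ! i else 0)"

lemma dmat_carrier[simp]: "dmat es \<in> carrier_mat (length es) (length es)"
  unfolding dmat_def by simp

lemma spectral:
  fixes A :: "real mat"
  assumes "A \<in> carrier_mat n n" "transpose_mat A = A"
  shows "\<exists>P es. P \<in> carrier_mat n n \<and> length es = n \<and> transpose_mat P * P = 1\<^sub>m n \<and> A * P = P * dmat es"
  using assms
proof (induction n arbitrary: A)
  case 0
  show ?case using 0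
    by (intro exI[of _ "1\<^sub>m 0"] exI[of _ "[]"]) (auto intro!: eq_matI simp: dmat_def)
next
  case (Suc m)
  define n where "n = Suc m"
  have A: "A \<in> carrier_mat n n" using Suc.prems n_def by simp
  have symA: "A $$ (i,j) = A $$ (j,i)" if "i < n" "j < n" for i j
    using that A Suc.prems(2) by (metis carrier_matD index_transpose_mat(1))
  obtain e w where w: "w \<in> carrier_vec n" "w \<noteq> 0\<^sub>v n" "A *\<^sub>v w = e \<cdot>\<^sub>v w"
    using real_eig[OF A symA] n_def by auto
  have weq: "(\<Sum>j<n. A $$ (i,j) * w $ j) = e * w $ i" if i: "i < n" for i
  proof -
    have "(A *\<^sub>v w) $ i = (e \<cdot>\<^sub>v w) $ i" using w by simp
    then show ?thesis using i A w
      by (simp add: mult_mat_vec_def scalar_prod_def row_def lessThan_atLeast0 mult.commute)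
  qed
  define s where "s = sqrt (\<Sum>i<n. (w $ i) ^ 2)"
  have spos: "(\<Sum>i<n. (w $ i) ^ 2) > 0"
  proof -
    obtain i where i: "i < n" "w $ i \<noteq> 0" using w by (metis carrier_vecD eq_vecI index_zero_vec(1,2))
    then show ?thesis by (intro sum_pos2[of _ i]) auto
  qed
  then have s0: "s > 0" unfolding s_def by simp
  define v where "v = (\<lambda>i. w $ i / s)"
  have unit: "(\<Sum>i<n. v i ^ 2) = 1"
  proof -
    have "(\<Sum>i<n. v i ^ 2) = (\<Sum>i<n. (w $ i) ^ 2) / s ^ 2"
      unfolding v_def by (simp add: power_divide sum_divide_distrib)
    also have "s ^ 2 = (\<Sum>i<n. (w $ i) ^ 2)" unfolding s_def using spos by simp
    finally show ?thesis using spos by simp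
  qed
  have veq: "(\<Sum>j<n. A $$ (i,j) * v j) = e * v i" if i: "i < n" for i
  proof -
    have "(\<Sum>j<n. A $$ (i,j) * v j) = (\<Sum>j<n. A $$ (i,j) * w $ j) / s"
      unfolding v_def by (simp add: sum_divide_distrib)
    then show ?thesis using weq[OF i] unfolding v_def by simp
  qed
  define u where "u \<equiv> (\<lambda>i. v i - (if i = 0 then 1 else 0))"
  define H where "H \<equiv> mat n n (\<lambda>(i,j). (if i = j then 1 else 0) - 2 / (\<Sum>k<n. u k ^ 2) * u i * u j)"
  have n0: "n > 0" unfolding n_def by simp
  have H: "H \<in> carrier_mat n n" unfolding H_def u_def by (rule householder(1)[OF n0 unit])
  have HT: "transpose_mat H = H" unfolding H_def u_def by (rule householder(2)[OF n0 unit])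
  have HH: "H * H = 1\<^sub>m n" unfolding H_def u_def by (rule householder(3)[OF n0 unit])
  have H0: "\<And>i. i < n \<Longrightarrow> H $$ (i,0) = v i" unfolding H_def u_def by (rule householder(4)[OF n0 unit])
  have symH: "H $$ (i,j) = H $$ (j,i)" if "i < n" "j < n" for i j
    using that H HT by (metis carrier_matD index_transpose_mat(1))
  define A' where "A' = H * A * H"
  have A': "A' \<in> carrier_mat n n" unfolding A'_def using H A by simp
  have A'T: "transpose_mat A' = A'"
    unfolding A'_def using H A HT Suc.prems(2) n_def
    by (simp add: transpose_mult[of _ n n _ n] assoc_mult_mat[of _ n n _ n _ n])
  have col0: "A' $$ (i,0) = (if i = 0 then e else 0)" if i: "i < n" for i
  proof -
    have HA: "H * A \<in> carrier_mat n n" using H A by simp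
    have "A' $$ (i,0) = (\<Sum>l<n. (H * A) $$ (i,l) * H $$ (l,0))"
      unfolding A'_def by (rule mat_mult_entry[OF HA H i n0])
    also have "\<dots> = (\<Sum>l<n. (\<Sum>k<n. H $$ (i,k) * A $$ (k,l)) * H $$ (l,0))"
      by (rule sum.cong[OF refl]) (simp add: mat_mult_entry[OF H A] i)
    also have "\<dots> = (\<Sum>k<n. H $$ (i,k) * (\<Sum>l<n. A $$ (k,l) * v l))"
      using H0 by (simp add: sum_distrib_left sum_distrib_right mult.assoc) (rule sum.swap)
    also have "\<dots> = e * (\<Sum>k<n. H $$ (i,k) * H $$ (k,0))"
      using veq H0 by (simp add: sum_distrib_left mult.left_commute)
    also have "(\<Sum>k<n. H $$ (i,k) * H $$ (k,0)) = (H * H) $$ (i,0)"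
      using i n0 by (simp add: mat_mult_entry[OF H H])
    also have "\<dots> = (if i = 0 then 1 else 0)" using HH i n0 by simp
    finally show ?thesis by simp
  qed
  have symA': "A' $$ (i,j) = A' $$ (j,i)" if "i < n" "j < n" for i j
    using that A' A'T by (metis carrier_matD index_transpose_mat(1))
  define A3 where "A3 = mat m m (\<lambda>(i,j). A' $$ (Suc i, Suc j))"
  have A3: "A3 \<in> carrier_mat m m" unfolding A3_def by simp
  have A3T: "transpose_mat A3 = A3"
    unfolding A3_def by (rule eq_matI) (auto simp: symA' n_def)
  obtain Q es3 where Q: "Q \<in> carrier_mat m m" "length es3 = m" "transpose_mat Q * Q = 1\<^sub>m m"
    "A3 * Q = Q * dmat es3"
    using Suc.IH[OF A3 A3T] by blast
  define E1 where "E1 = mat 1 1 (\<lambda>_. e)"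
  define B where "B = four_block_mat (1\<^sub>m 1) (0\<^sub>m 1 m) (0\<^sub>m m 1) Q"
  have E1: "E1 \<in> carrier_mat 1 1" unfolding E1_def by simp
  have B: "B \<in> carrier_mat n n"
    using four_block_carrier_mat[OF one_carrier_mat[of 1] Q(1), of "0\<^sub>m 1 m" "0\<^sub>m m 1"] unfolding B_def n_def by simp
  have A'blk: "A' = four_block_mat E1 (0\<^sub>m 1 m) (0\<^sub>m m 1) A3"
  proof (rule eq_matI)
    fix i j assume "i < dim_row (four_block_mat E1 (0\<^sub>m 1 m) (0\<^sub>m m 1) A3)"
      "j < dim_col (four_block_mat E1 (0\<^sub>m 1 m) (0\<^sub>m m 1) A3)"
    then have i: "i < n" and j: "j < n" using E1 A3 n_def by auto
    have r0: "A' $$ (0,j) = (if j = 0 then e else 0)" using symA'[OF n0 j] col0[OF j] by simp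
    show "A' $$ (i,j) = four_block_mat E1 (0\<^sub>m 1 m) (0\<^sub>m m 1) A3 $$ (i,j)"
    proof (cases i)
      case 0
      then show ?thesis using r0 j E1 A3 n_def unfolding E1_def by auto
    next
      case (Suc i')
      show ?thesis
      proof (cases j)
        case 0
        then show ?thesis using col0[OF i] Suc i E1 A3 n_def by auto
      next
        case (Suc j')
        then show ?thesis using \<open>i = Suc i'\<close> i j E1 A3 n_def unfolding A3_def by auto
      qed
    qed
  qed (use A' E1 A3 n_def in auto)
  have Dblk: "dmat (e # es3) = four_block_mat E1 (0\<^sub>m 1 m) (0\<^sub>m m 1) (dmat es3)"
    by (rule eq_matI) (auto simp: dmat_def E1_def Q(2) nth_Cons split: nat.splits)
  have BtB: "transpose_mat B * B = 1\<^sub>m n"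
  proof -
    have tB: "transpose_mat B = four_block_mat (1\<^sub>m 1) (0\<^sub>m 1 m) (0\<^sub>m m 1) (transpose_mat Q)"
      unfolding B_def using Q by (subst transpose_four_block_mat[of _ 1 1 _ m _ m]) auto
    have "transpose_mat B * B = four_block_mat (1\<^sub>m 1) (0\<^sub>m 1 m) (0\<^sub>m m 1) (transpose_mat Q * Q)"
      unfolding tB unfolding B_def using Q by (subst mult_four_block_mat[of _ 1 1 _ m _ m]) auto
    then show ?thesis using Q n_def by simp
  qed
  have A'B: "A' * B = B * dmat (e # es3)"
  proof -
    have "A' * B = four_block_mat E1 (0\<^sub>m 1 m) (0\<^sub>m m 1) (A3 * Q)"
      unfolding A'blk B_def using Q E1 A3 by (subst mult_four_block_mat[of _ 1 1 _ m _ m]) auto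
    moreover have "B * dmat (e # es3) = four_block_mat E1 (0\<^sub>m 1 m) (0\<^sub>m m 1) (Q * dmat es3)"
      unfolding Dblk B_def using Q E1 left_mult_zero_mat[OF dmat_carrier[of es3], of 1]
      by (subst mult_four_block_mat[of _ 1 1 _ m _ m]) auto
    ultimately show ?thesis using Q by simp
  qed
  define P where "P = H * B"
  have P: "P \<in> carrier_mat n n" unfolding P_def using H B by simp
  have D: "dmat (e # es3) \<in> carrier_mat n n" using dmat_carrier[of "e # es3"] Q n_def by simp
  have "transpose_mat P * P = transpose_mat B * (H * H) * B"
    unfolding P_def using H B HT
    by (simp add: transpose_mult[OF H B] assoc_mult_mat[of _ n n _ n _ n])
  also have "\<dots> = 1\<^sub>m n" using HH BtB B by simp
  finally have PtP: "transpose_mat P * P = 1\<^sub>m n" .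
  have HHX: "H * (H * X) = X" if X: "X \<in> carrier_mat n n" for X
  proof -
    have "H * (H * X) = (H * H) * X" by (rule assoc_mult_mat[symmetric, OF H H X])
    then show ?thesis using HH X by simp
  qed
  have "A * P = H * (H * A * H) * B"
    unfolding P_def using H A B HHX[of "A * (H * B)"]
    by (simp add: assoc_mult_mat[of _ n n _ n _ n])
  also have "\<dots> = H * (A' * B)" unfolding A'_def using H A B
    by (simp add: assoc_mult_mat[of _ n n _ n _ n])
  also have "\<dots> = P * dmat (e # es3)" unfolding A'B P_def using H B D
    by (simp add: assoc_mult_mat[of _ n n _ n _ n])
  finally have "A * P = P * dmat (e # es3)" .
  then show ?case using P PtP Q n_def by (intro exI[of _ P] exI[of _ "e # es3"]) simp
qed

lemma char_poly_dmat: "char_poly (dmat es) = (\<Prod>a\<leftarrow>es. [:- a, 1:])"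
proof -
  have ut: "upper_triangular (dmat es)" unfolding upper_triangular_def dmat_def by simp
  have "diag_mat (dmat es) = es" unfolding diag_mat_def dmat_def
    by (rule nth_equalityI) auto
  then show ?thesis using char_poly_upper_triangular[OF dmat_carrier ut] by (simp only:)
qed
lemma sum_mset_singletons: "(\<Sum>a\<leftarrow>es. {#a#}) = mset (es :: real list)"
proof (induction es)
  case Nil
  then show ?case by simp
next
  case (Cons a es)
  then show ?case by simp
qed

lemma proots_dmat: "proots (char_poly (dmat es)) = mset es"
proof -
  have "0 \<notin> set (map (\<lambda>a. [:- a, 1:]) es)" by auto
  then have "proots (\<Prod>a\<leftarrow>es. [:- a, 1:]) = (\<Sum>a\<leftarrow>es. proots [:- a, 1:])"
    using proots_prod_list[of "map (\<lambda>a. [:- a, 1:]) es"] by (simp add: comp_def)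
  also have "\<dots> = (\<Sum>a\<leftarrow>es. {#a#})" by simp
  finally show ?thesis unfolding char_poly_dmat sum_mset_singletons .
qed

lemma spectral_facts:
  fixes M :: "real mat"
  assumes M: "M \<in> carrier_mat n n" and MT: "transpose_mat M = M"
  shows "\<exists>P es. length es = n \<and>
    (\<forall>i<n. \<forall>j<n. (\<Sum>r<n. P $$ (r,i) * P $$ (r,j)) = (if i = j then 1 else 0)) \<and>
    (\<forall>a<n. \<forall>b<n. (\<Sum>i<n. P $$ (a,i) * P $$ (b,i)) = (if a = b then 1 else 0)) \<and>
    (\<forall>a<n. \<forall>b<n. M $$ (a,b) = (\<Sum>i<n. P $$ (a,i) * es ! i * P $$ (b,i))) \<and>
    eigenvalues_desc M = rev (sort es)"
proof -
  obtain P es where P: "P \<in> carrier_mat n n" and les: "length es = n"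
    and PtP: "transpose_mat P * P = 1\<^sub>m n" and MP: "M * P = P * dmat es"
    using spectral[OF M MT] by blast
  have Pt: "transpose_mat P \<in> carrier_mat n n" using P by simp
  have D: "dmat es \<in> carrier_mat n n" using les dmat_carrier[of es] by simp
  have PPt: "P * transpose_mat P = 1\<^sub>m n" by (rule mat_mult_left_right_inverse[OF Pt P PtP])
  have "M = M * (P * transpose_mat P)" using PPt M by simp
  also have "\<dots> = (M * P) * transpose_mat P" using M P Pt by (simp add: assoc_mult_mat[of _ n n _ n _ n])
  finally have Meq: "M = P * dmat es * transpose_mat P" unfolding MP .
  have sim: "similar_mat M (dmat es)" unfolding similar_mat_def
    using similar_mat_witI[OF PPt PtP Meq M D P Pt] by blast
  have ev: "eigenvalues_desc M = rev (sort es)"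
    unfolding eigenvalues_desc_def char_poly_similar[OF sim] proots_dmat by simp
  have o1: "(\<Sum>r<n. P $$ (r,i) * P $$ (r,j)) = (if i = j then 1 else 0)" if "i < n" "j < n" for i j
  proof -
    have "(transpose_mat P * P) $$ (i,j) = (\<Sum>r<n. P $$ (r,i) * P $$ (r,j))"
      using that P Pt by (subst mat_mult_entry[OF Pt P]) auto
    then show ?thesis using PtP that by simp
  qed
  have o2: "(\<Sum>i<n. P $$ (a,i) * P $$ (b,i)) = (if a = b then 1 else 0)" if "a < n" "b < n" for a b
  proof -
    have "(P * transpose_mat P) $$ (a,b) = (\<Sum>i<n. P $$ (a,i) * P $$ (b,i))"
      using that P Pt by (subst mat_mult_entry[OF P Pt]) auto
    then show ?thesis using PPt that by simp
  qed
  have PD: "P * dmat es \<in> carrier_mat n n" using P D by simp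
  have ent: "M $$ (a,b) = (\<Sum>i<n. P $$ (a,i) * es ! i * P $$ (b,i))" if ab: "a < n" "b < n" for a b
  proof -
    have "M $$ (a,b) = (\<Sum>i<n. (P * dmat es) $$ (a,i) * transpose_mat P $$ (i,b))"
      using Meq mat_mult_entry[OF PD Pt ab] by simp
    also have "\<dots> = (\<Sum>i<n. P $$ (a,i) * es ! i * P $$ (b,i))"
    proof (rule sum.cong[OF refl])
      fix i assume i: "i \<in> {..<n}"
      have "(P * dmat es) $$ (a,i) = (\<Sum>k<n. P $$ (a,k) * dmat es $$ (k,i))"
        using mat_mult_entry[OF P D] ab i by simp
      also have "\<dots> = (\<Sum>k<n. if k = i then P $$ (a,i) * es ! i else 0)"
        using i les by (intro sum.cong[OF refl]) (auto simp: dmat_def)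
      also have "\<dots> = P $$ (a,i) * es ! i" using i by simp
      finally show "(P * dmat es) $$ (a,i) * transpose_mat P $$ (i,b) = P $$ (a,i) * es ! i * P $$ (b,i)"
        using i ab P by simp
    qed
    finally show ?thesis .
  qed
  show ?thesis using les o1 o2 ent ev by blast
qed

lemma topk:
  fixes L :: "real list" and c :: "nat \<Rightarrow> real"
  assumes desc: "\<And>i j. i \<le> j \<Longrightarrow> j < length L \<Longrightarrow> L ! j \<le> L ! i"
    and c01: "\<And>j. j < length L \<Longrightarrow> 0 \<le> c j \<and> c j \<le> 1"
    and csum: "(\<Sum>j<length L. c j) = real k" and k1: "1 \<le> k" and kL: "k \<le> length L"
  shows "(\<Sum>j<length L. L ! j * c j) \<le> sum_list (take k L)"
proof -
  define N where "N = length L"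
  define t where "t = L ! (k - 1)"
  have st: "sum_list (take k L) = (\<Sum>j<k. L ! j)"
    using kL by (simp add: sum_list_sum_nth lessThan_atLeast0 min_absorb2)
  have split: "{..<N} = {..<k} \<union> {k..<N}" using kL N_def by auto
  have disj: "{..<k} \<inter> {k..<N} = {}" by auto
  have s1: "(\<Sum>j<N. L ! j * c j) = (\<Sum>j<k. L ! j * c j) + (\<Sum>j\<in>{k..<N}. L ! j * c j)"
    unfolding split by (rule sum.union_disjoint) (use disj in auto)
  have s2: "(\<Sum>j<N. c j) = (\<Sum>j<k. c j) + (\<Sum>j\<in>{k..<N}. c j)"
    unfolding split by (rule sum.union_disjoint) (use disj in auto)
  have a1: "(\<Sum>j<k. t * (1 - c j)) \<le> (\<Sum>j<k. L ! j * (1 - c j))"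
  proof (rule sum_mono)
    fix j assume "j \<in> {..<k}"
    then have "t \<le> L ! j" "0 \<le> 1 - c j" using desc[of j "k - 1"] c01[of j] kL k1 unfolding t_def by auto
    then show "t * (1 - c j) \<le> L ! j * (1 - c j)" by (rule mult_right_mono)
  qed
  have a2: "(\<Sum>j\<in>{k..<N}. L ! j * c j) \<le> (\<Sum>j\<in>{k..<N}. t * c j)"
  proof (rule sum_mono)
    fix j assume "j \<in> {k..<N}"
    then have "L ! j \<le> t" "0 \<le> c j" using desc[of "k - 1" j] c01[of j] kL k1 unfolding t_def N_def by auto
    then show "L ! j * c j \<le> t * c j" by (rule mult_right_mono)
  qed
  have e1: "(\<Sum>j<k. t * (1 - c j)) = t * k - t * (\<Sum>j<k. c j)"
    by (simp add: sum_subtractf sum_distrib_left[symmetric] right_diff_distrib)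
  have e2: "(\<Sum>j<k. L ! j * (1 - c j)) = (\<Sum>j<k. L ! j) - (\<Sum>j<k. L ! j * c j)"
    by (simp add: sum_subtractf right_diff_distrib)
  have e3: "(\<Sum>j\<in>{k..<N}. t * c j) = t * (\<Sum>j\<in>{k..<N}. c j)" by (simp add: sum_distrib_left)
  have "(\<Sum>j<k. c j) + (\<Sum>j\<in>{k..<N}. c j) = k" using s2 csum N_def by simp
  then show ?thesis using s1 a1 a2 e1 e2 e3 st N_def
    by (smt (verit, best) right_diff_distrib)
qed

definition ind :: "(nat \<Rightarrow> nat \<Rightarrow> bool) \<Rightarrow> nat \<Rightarrow> nat \<Rightarrow> real" where
  "ind E a b = (if E a b then 1 else 0)"

lemma card_as_ind: "finite B \<Longrightarrow> real (card {b \<in> B. E a b}) = (\<Sum>b\<in>B. ind E a b)"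
  unfolding ind_def by (simp add: sum.If_cases Int_def)

lemma degree_ind: "real (degree n E a) = (\<Sum>b<n. ind E a b)"
proof -
  have "{v. v < n \<and> E a v} = {b \<in> {..<n}. E a b}" by auto
  then show ?thesis unfolding degree_def using card_as_ind[of "{..<n}" E a] by simp
qed

lemma card_pairs_ind:
  assumes "finite A" "finite B"
  shows "real (card {(a,b). a \<in> A \<and> b \<in> B \<and> E a b}) = (\<Sum>a\<in>A. \<Sum>b\<in>B. ind E a b)"
proof -
  have "{(a,b). a \<in> A \<and> b \<in> B \<and> E a b} = Sigma A (\<lambda>a. {b \<in> B. E a b})" by auto
  then have "card {(a,b). a \<in> A \<and> b \<in> B \<and> E a b} = (\<Sum>a\<in>A. card {b \<in> B. E a b})"
    using assms by (simp add: card_SigmaI)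
  then show ?thesis using card_as_ind[OF assms(2)] by simp
qed

lemma card_edges:
  assumes G: "simple_graph n E"
  shows "2 * real (card (edges n E)) = (\<Sum>a<n. \<Sum>b<n. ind E a b)"
proof -
  have sym: "E a b \<Longrightarrow> E b a" and irr: "\<not> E a a" and bd: "E a b \<Longrightarrow> a < n \<and> b < n" for a b
    using G unfolding simple_graph_def by blast+
  define Op where "Op = {(a,b). a \<in> {..<n} \<and> b \<in> {..<n} \<and> E a b}"
  define O1 where "O1 = {(a,b). a < b \<and> a < n \<and> b < n \<and> E a b}"
  define O2 where "O2 = {(a,b). b < a \<and> a < n \<and> b < n \<and> E a b}"
  have fin: "finite O1" "finite O2"
  proof -
    have "O1 \<subseteq> {..<n} \<times> {..<n}" "O2 \<subseteq> {..<n} \<times> {..<n}" unfolding O1_def O2_def by auto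
    then show "finite O1" "finite O2" by (auto intro: finite_subset)
  qed
  have OU: "Op = O1 \<union> O2" unfolding Op_def O1_def O2_def using irr by auto (metis linorder_neqE_nat)
  have disj: "O1 \<inter> O2 = {}" unfolding O1_def O2_def by auto
  have c12: "card O2 = card O1"
  proof -
    have "bij_betw (\<lambda>(a,b). (b,a)) O1 O2"
      unfolding bij_betw_def inj_on_def O1_def O2_def
      by (auto simp: sym image_iff intro!: exI[of _ "(b,a)" for a b])
    then show ?thesis by (simp add: bij_betw_same_card)
  qed
  have ce: "card O1 = card (edges n E)"
  proof -
    have "bij_betw (\<lambda>(a,b). {a,b}) O1 (edges n E)"
      unfolding bij_betw_def
    proof
      show "inj_on (\<lambda>(a, b). {a, b}) O1"
        unfolding inj_on_def O1_def by (auto simp: doubleton_eq_iff)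
      show "(\<lambda>(a, b). {a, b}) ` O1 = edges n E"
      proof
        show "(\<lambda>(a, b). {a, b}) ` O1 \<subseteq> edges n E" unfolding O1_def edges_def by auto
        show "edges n E \<subseteq> (\<lambda>(a, b). {a, b}) ` O1"
        proof
          fix x assume "x \<in> edges n E"
          then obtain u v where x: "x = {u,v}" "u < n" "v < n" "E u v" unfolding edges_def by auto
          have "u \<noteq> v" using x irr by auto
          then show "x \<in> (\<lambda>(a, b). {a, b}) ` O1"
          proof (cases "u < v")
            case True
            then show ?thesis using x unfolding O1_def by (auto intro!: image_eqI[of _ _ "(u,v)"])
          next
            case False
            then have "v < u" using \<open>u \<noteq> v\<close> by simp
            then show ?thesis using x sym[OF x(4)] unfolding O1_def
              by (auto intro!: image_eqI[of _ _ "(v,u)"])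
          qed
        qed
      qed
    qed
    then show ?thesis by (rule bij_betw_same_card)
  qed
  have "card Op = card O1 + card O2" unfolding OU using fin disj by (rule card_Un_disjoint)
  then have "card Op = 2 * card (edges n E)" using c12 ce by simp
  moreover have "real (card Op) = (\<Sum>a<n. \<Sum>b<n. ind E a b)"
    unfolding Op_def by (rule card_pairs_ind) auto
  ultimately show ?thesis by simp
qed

lemma card_boundary:
  assumes G: "simple_graph n E" and U: "U \<subseteq> {..<n}" and W: "W \<subseteq> {..<n}" and UW: "U \<inter> W = {}"
  shows "real (card (boundary n E U W)) = (\<Sum>a\<in>U. \<Sum>b\<in>W. ind E a b)"
proof -
  have fU: "finite U" and fW: "finite W" using U W finite_subset by auto
  define Op where "Op = {(a,b). a \<in> U \<and> b \<in> W \<and> E a b}"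
  have "bij_betw (\<lambda>(a,b). {a,b}) Op (boundary n E U W)"
    unfolding bij_betw_def
  proof
    show "inj_on (\<lambda>(a, b). {a, b}) Op"
      unfolding inj_on_def Op_def using UW by (auto simp: doubleton_eq_iff)
    show "(\<lambda>(a, b). {a, b}) ` Op = boundary n E U W"
      unfolding Op_def boundary_def using U W by auto
  qed
  then have "card Op = card (boundary n E U W)" by (rule bij_betw_same_card)
  moreover have "real (card Op) = (\<Sum>a\<in>U. \<Sum>b\<in>W. ind E a b)"
    unfolding Op_def by (rule card_pairs_ind[OF fU fW])
  ultimately show ?thesis by simp
qed

lemma cauchy_schwarz_sum:
  fixes x :: "nat \<Rightarrow> real"
  assumes "finite W"
  shows "(\<Sum>a\<in>W. x a)^2 \<le> real (card W) * (\<Sum>a\<in>W. x a ^ 2)"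
proof -
  have "0 \<le> (\<Sum>a\<in>W. \<Sum>b\<in>W. (x a - x b)^2)" by (intro sum_nonneg) auto
  also have "(\<Sum>a\<in>W. \<Sum>b\<in>W. (x a - x b)^2)
      = (\<Sum>a\<in>W. \<Sum>b\<in>W. x a ^ 2) + (\<Sum>a\<in>W. \<Sum>b\<in>W. x b ^ 2) - 2 * (\<Sum>a\<in>W. \<Sum>b\<in>W. x a * x b)"
    by (simp add: power2_diff sum.distrib sum_subtractf sum_distrib_left algebra_simps)
  also have "\<dots> = 2 * real (card W) * (\<Sum>a\<in>W. x a ^ 2) - 2 * (\<Sum>a\<in>W. x a)^2"
    by (simp add: power2_eq_square sum_product sum_distrib_left[symmetric] mult.commute)
  finally show ?thesis by simp
qed

lemma sum_sq_cong: "(\<Sum>a\<in>W. \<Sum>b\<in>W. x a * x b) = (\<Sum>a\<in>W. (x a :: real))^2"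
  by (simp add: power2_eq_square sum_product)

theorem theorem5p4:
  fixes \<alpha> :: real and n k :: nat and E :: "nat \<Rightarrow> nat \<Rightarrow> bool" and U :: "nat set"
  assumes "0 \<le> \<alpha>" and "\<alpha> < 1"
    and "simple_graph n E" and "connected_graph n E"
    and "1 \<le> k" and "k \<le> n"
    and "U \<subseteq> {0..<n}" and "card U = k - 1"
  shows "S_k k (A_alpha \<alpha> n E) \<ge>
     (\<alpha> - 1 / real (n - k + 1)) * (\<Sum>u\<in>U. real (degree n E u))
     + (2 * real (card (edges n E)) - (1 - \<alpha>) * real (card (boundary n E U ({0..<n} - U))))
       / real (n - k + 1)"
proof -
  note G = assms(3)
  have symE: "E a b \<Longrightarrow> E b a" and irr: "\<not> E a a" for a b
    using G unfolding simple_graph_def by blast+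
  define W where "W = {0..<n} - U"
  define N where "N = n - k + 1"
  have U: "U \<subseteq> {..<n}" using assms(7) by auto
  have Wn: "W \<subseteq> {..<n}" unfolding W_def by auto
  have UW: "U \<inter> W = {}" unfolding W_def by auto
  have UWn: "U \<union> W = {..<n}" unfolding W_def using U by auto
  have fU: "finite U" and fW: "finite W" using U Wn finite_subset by auto
  have cW: "card W = N"
    unfolding W_def N_def using assms(5,6,7,8) fU by (simp add: card_Diff_subset)
  have N0: "real N > 0" unfolding N_def by simp
  define M where "M = A_alpha \<alpha> n E"
  have Mc: "M \<in> carrier_mat n n" unfolding M_def A_alpha_def deg_mat_def adj_mat_def by simp
  have Ment: "M $$ (a,b) = \<alpha> * (if a = b then real (degree n E a) else 0) + (1 - \<alpha>) * ind E a b"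
    if "a < n" "b < n" for a b
    using that unfolding M_def A_alpha_def deg_mat_def adj_mat_def ind_def by simp
  have MT: "transpose_mat M = M"
    by (rule eq_matI) (use Mc in \<open>auto simp: Ment ind_def dest: symE\<close>)
  obtain P es where les: "length es = n"
    and o1: "\<forall>i<n. \<forall>j<n. (\<Sum>r<n. P $$ (r,i) * P $$ (r,j)) = (if i = j then 1 else 0)"
    and o2: "\<forall>a<n. \<forall>b<n. (\<Sum>i<n. P $$ (a,i) * P $$ (b,i)) = (if a = b then 1 else 0)"
    and ent: "\<forall>a<n. \<forall>b<n. M $$ (a,b) = (\<Sum>i<n. P $$ (a,i) * es ! i * P $$ (b,i))"
    and ev: "eigenvalues_desc M = rev (sort es)"
    using spectral_facts[OF Mc MT] by blast
  define c where "c = (\<lambda>i. (\<Sum>u\<in>U. P $$ (u,i) ^ 2) + (\<Sum>w\<in>W. P $$ (w,i)) ^ 2 / real N)"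
  have Q1: "(\<Sum>u\<in>U. M $$ (u,u)) + (\<Sum>a\<in>W. \<Sum>b\<in>W. M $$ (a,b)) / real N = (\<Sum>i<n. es ! i * c i)"
  proof -
    have "(\<Sum>u\<in>U. M $$ (u,u)) = (\<Sum>u\<in>U. \<Sum>i<n. es ! i * P $$ (u,i) ^ 2)"
      using U ent by (intro sum.cong) (auto simp: power2_eq_square mult_ac)
    also have "\<dots> = (\<Sum>i<n. es ! i * (\<Sum>u\<in>U. P $$ (u,i) ^ 2))"
      by (subst sum.swap) (simp add: sum_distrib_left)
    finally have s1: "(\<Sum>u\<in>U. M $$ (u,u)) = (\<Sum>i<n. es ! i * (\<Sum>u\<in>U. P $$ (u,i) ^ 2))" .
    have "(\<Sum>a\<in>W. \<Sum>b\<in>W. M $$ (a,b)) = (\<Sum>a\<in>W. \<Sum>b\<in>W. \<Sum>i<n. es ! i * (P $$ (a,i) * P $$ (b,i)))"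
      using Wn ent by (intro sum.cong) (auto simp: mult_ac)
    also have "\<dots> = (\<Sum>a\<in>W. \<Sum>i<n. \<Sum>b\<in>W. es ! i * (P $$ (a,i) * P $$ (b,i)))"
      by (intro sum.cong refl sum.swap)
    also have "\<dots> = (\<Sum>i<n. \<Sum>a\<in>W. \<Sum>b\<in>W. es ! i * (P $$ (a,i) * P $$ (b,i)))"
      by (rule sum.swap)
    also have "\<dots> = (\<Sum>i<n. es ! i * (\<Sum>w\<in>W. P $$ (w,i)) ^ 2)"
    proof (rule sum.cong[OF refl])
      fix i
      have "(\<Sum>a\<in>W. \<Sum>b\<in>W. es ! i * (P $$ (a,i) * P $$ (b,i))) = es ! i * (\<Sum>a\<in>W. \<Sum>b\<in>W. P $$ (a,i) * P $$ (b,i))"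
        by (simp add: sum_distrib_left)
      then show "(\<Sum>a\<in>W. \<Sum>b\<in>W. es ! i * (P $$ (a,i) * P $$ (b,i))) = es ! i * (\<Sum>w\<in>W. P $$ (w,i)) ^ 2"
        by (simp only: sum_sq_cong)
    qed
    finally have s2: "(\<Sum>a\<in>W. \<Sum>b\<in>W. M $$ (a,b)) = (\<Sum>i<n. es ! i * (\<Sum>w\<in>W. P $$ (w,i)) ^ 2)" .
    have "(\<Sum>i<n. es ! i * c i) = (\<Sum>i<n. es ! i * (\<Sum>u\<in>U. P $$ (u,i) ^ 2)) + (\<Sum>i<n. es ! i * (\<Sum>w\<in>W. P $$ (w,i)) ^ 2 / real N)"
      unfolding c_def by (simp add: sum.distrib[symmetric] algebra_simps)
    then show ?thesis unfolding s1 s2 by (simp add: sum_divide_distrib)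
  qed
  have Q2: "0 \<le> c i \<and> c i \<le> 1" if i: "i < n" for i
  proof
    show "0 \<le> c i" unfolding c_def using N0 by (intro add_nonneg_nonneg sum_nonneg) auto
    have cs: "(\<Sum>w\<in>W. P $$ (w,i)) ^ 2 / real N \<le> (\<Sum>w\<in>W. P $$ (w,i) ^ 2)"
      using cauchy_schwarz_sum[OF fW, of "\<lambda>w. P $$ (w,i)"] cW N0 by (simp add: divide_le_eq mult.commute)
    have "(\<Sum>u\<in>U. P $$ (u,i) ^ 2) + (\<Sum>w\<in>W. P $$ (w,i) ^ 2) = (\<Sum>r<n. P $$ (r,i) ^ 2)"
      unfolding UWn[symmetric] by (rule sum.union_disjoint[symmetric]) (use fU fW UW in auto)
    also have "\<dots> = 1" using o1 i by (simp add: power2_eq_square)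
    finally show "c i \<le> 1" unfolding c_def using cs by simp
  qed
  have Q3: "(\<Sum>i<n. c i) = real k"
  proof -
    have "(\<Sum>i<n. \<Sum>u\<in>U. P $$ (u,i) ^ 2) = (\<Sum>u\<in>U. \<Sum>i<n. P $$ (u,i) * P $$ (u,i))"
      by (subst sum.swap) (simp add: power2_eq_square)
    also have "\<dots> = (\<Sum>u\<in>U. 1)" using U o2 by (intro sum.cong) auto
    also have "\<dots> = real (k - 1)" using assms(8) by simp
    finally have t1: "(\<Sum>i<n. \<Sum>u\<in>U. P $$ (u,i) ^ 2) = real (k - 1)" .
    have "(\<Sum>i<n. (\<Sum>w\<in>W. P $$ (w,i)) ^ 2) = (\<Sum>i<n. \<Sum>a\<in>W. \<Sum>b\<in>W. P $$ (a,i) * P $$ (b,i))"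
      by (simp add: sum_sq_cong)
    also have "\<dots> = (\<Sum>a\<in>W. \<Sum>i<n. \<Sum>b\<in>W. P $$ (a,i) * P $$ (b,i))" by (rule sum.swap)
    also have "\<dots> = (\<Sum>a\<in>W. \<Sum>b\<in>W. \<Sum>i<n. P $$ (a,i) * P $$ (b,i))"
      by (intro sum.cong refl sum.swap)
    also have "\<dots> = (\<Sum>a\<in>W. \<Sum>b\<in>W. if a = b then 1 else 0)"
    proof (intro sum.cong refl)
      fix a b assume "a \<in> W" "b \<in> W"
      then have "a < n" "b < n" using Wn by auto
      then show "(\<Sum>i<n. P $$ (a,i) * P $$ (b,i)) = (if a = b then 1 else 0)" using o2 by blast
    qed
    also have "\<dots> = real N" using fW cW by simp
    finally have t2: "(\<Sum>i<n. (\<Sum>w\<in>W. P $$ (w,i)) ^ 2) = real N" .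
    have "(\<Sum>i<n. c i) = (\<Sum>i<n. \<Sum>u\<in>U. P $$ (u,i) ^ 2) + (\<Sum>i<n. (\<Sum>w\<in>W. P $$ (w,i)) ^ 2) / real N"
      unfolding c_def by (simp add: sum.distrib sum_divide_distrib)
    also have "\<dots> = real k" unfolding t1 t2 using N0 assms(5) by simp
    finally show ?thesis .
  qed
  have Q4: "(\<Sum>i<n. es ! i * c i) \<le> S_k k M"
  proof -
    define L where "L = rev (sort es)"
    have Sk: "S_k k M = sum_list (take k L)" unfolding S_k_def ev L_def ..
    have lL: "length L = n" unfolding L_def using les by simp
    have "mset L = mset es" unfolding L_def by simp
    then obtain p where p: "p permutes {..<length es}" and pl: "permute_list p es = L"
      by (rule mset_eq_permutation)
    have p': "p permutes {..<n}" using p les by simp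
    have Lnth: "L ! j = es ! p j" if "j < n" for j
      using permute_list_nth[OF p, of j] pl that les by simp
    have pn: "p j < n" if "j < n" for j using permutes_in_image[OF p', of j] that by simp
    have desc: "L ! j \<le> L ! i" if "i \<le> j" "j < length L" for i j
    proof -
      have "L ! j = sort es ! (n - Suc j)" "L ! i = sort es ! (n - Suc i)"
        using that lL les unfolding L_def by (auto simp: rev_nth)
      moreover have "sort es ! (n - Suc j) \<le> sort es ! (n - Suc i)"
        using that lL les by (intro sorted_nth_mono) auto
      ultimately show ?thesis by simp
    qed
    have e1: "(\<Sum>i<n. es ! i * c i) = (\<Sum>j<n. L ! j * (c \<circ> p) j)"
      using sum.permute[OF p', of "\<lambda>i. es ! i * c i"] Lnth by simp
    have e2: "(\<Sum>j<n. (c \<circ> p) j) = real k"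
      using sum.permute[OF p', of c] Q3 by simp
    have "(\<Sum>j<length L. L ! j * (c \<circ> p) j) \<le> sum_list (take k L)"
      by (rule topk[OF desc]) (use Q2 pn e2 lL assms(5,6) in auto)
    then show ?thesis using e1 lL Sk by simp
  qed
  have Q5: "(\<Sum>u\<in>U. M $$ (u,u)) + (\<Sum>a\<in>W. \<Sum>b\<in>W. M $$ (a,b)) / real N =
     (\<alpha> - 1 / real N) * (\<Sum>u\<in>U. real (degree n E u))
     + (2 * real (card (edges n E)) - (1 - \<alpha>) * real (card (boundary n E U W))) / real N"
  proof -
    define SU where "SU = (\<Sum>u\<in>U. real (degree n E u))"
    define SW where "SW = (\<Sum>u\<in>W. real (degree n E u))"
    define IWW where "IWW = (\<Sum>a\<in>W. \<Sum>b\<in>W. ind E a b)"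
    define Bd where "Bd = real (card (boundary n E U W))"
    have d1: "(\<Sum>u\<in>U. M $$ (u,u)) = \<alpha> * SU"
      unfolding SU_def sum_distrib_left using U by (intro sum.cong) (auto simp: Ment ind_def irr)
    have d2: "(\<Sum>a\<in>W. \<Sum>b\<in>W. M $$ (a,b)) = \<alpha> * SW + (1 - \<alpha>) * IWW"
    proof -
      have "(\<Sum>a\<in>W. \<Sum>b\<in>W. M $$ (a,b)) = (\<Sum>a\<in>W. \<alpha> * real (degree n E a) + (1 - \<alpha>) * (\<Sum>b\<in>W. ind E a b))"
      proof (rule sum.cong[OF refl])
        fix a assume a: "a \<in> W"
        have "(\<Sum>b\<in>W. M $$ (a,b)) = (\<Sum>b\<in>W. \<alpha> * (if a = b then real (degree n E a) else 0)) + (\<Sum>b\<in>W. (1 - \<alpha>) * ind E a b)"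
        proof (subst sum.distrib[symmetric], intro sum.cong refl)
          fix b assume "b \<in> W"
          then have "a < n" "b < n" using a Wn by auto
          then show "M $$ (a,b) = \<alpha> * (if a = b then real (degree n E a) else 0) + (1 - \<alpha>) * ind E a b"
            by (rule Ment)
        qed
        also have "(\<Sum>b\<in>W. \<alpha> * (if a = b then real (degree n E a) else 0)) = \<alpha> * real (degree n E a)"
          using a fW by (simp add: if_distrib[of "\<lambda>x. \<alpha> * x"] cong: if_cong)
        finally show "(\<Sum>b\<in>W. M $$ (a,b)) = \<alpha> * real (degree n E a) + (1 - \<alpha>) * (\<Sum>b\<in>W. ind E a b)"
          by (simp add: sum_distrib_left)
      qed
      also have "\<dots> = \<alpha> * SW + (1 - \<alpha>) * IWW"
        unfolding SW_def IWW_def by (simp add: sum.distrib sum_distrib_left)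
      finally show ?thesis .
    qed
    have dsplit: "real (degree n E a) = (\<Sum>b\<in>U. ind E a b) + (\<Sum>b\<in>W. ind E a b)" for a
      unfolding degree_ind UWn[symmetric] by (rule sum.union_disjoint) (use fU fW UW in auto)
    have bd: "Bd = (\<Sum>a\<in>W. \<Sum>b\<in>U. ind E a b)"
    proof -
      have "Bd = (\<Sum>a\<in>U. \<Sum>b\<in>W. ind E a b)" unfolding Bd_def by (rule card_boundary[OF G U Wn UW])
      also have "\<dots> = (\<Sum>b\<in>W. \<Sum>a\<in>U. ind E a b)" by (rule sum.swap)
      also have "\<dots> = (\<Sum>a\<in>W. \<Sum>b\<in>U. ind E a b)"
        by (intro sum.cong refl) (auto simp: ind_def dest: symE)
      finally show ?thesis .
    qed
    have iww: "IWW = SW - Bd"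
      unfolding IWW_def SW_def bd dsplit by (simp add: sum.distrib)
    have tot: "2 * real (card (edges n E)) = SU + SW"
    proof -
      have "2 * real (card (edges n E)) = (\<Sum>a<n. real (degree n E a))"
        unfolding card_edges[OF G] degree_ind ..
      also have "\<dots> = SU + SW" unfolding SU_def SW_def UWn[symmetric]
        by (rule sum.union_disjoint) (use fU fW UW in auto)
      finally show ?thesis .
    qed
    show ?thesis unfolding d1 d2 tot iww Bd_def[symmetric] SU_def[symmetric] using N0
      by (simp add: field_simps)
  qed
  show ?thesis using Q1 Q4 Q5 unfolding M_def N_def W_def by simp
qed

end
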